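(* Let $m\ge3$ be odd and $n\ge2$. Every completely positive tensor $\mathcal{A}\in S_{m,n}$ is a strongly SOS tensor.
   Context: $S_{m,n}$ is the set of real symmetric $m$th order $n$-dimensional tensors. For $\mathbf{u}\in\mathbb{R}^n$, $\mathbf{u}^m$ is the tensor with entries $u_{i_1}\cdots u_{i_m}$. A tensor is completely positive if it equals $\sum_{l=1}^r(\mathbf{u}^{(l)})^m$ for some positive integer $r$ and nonnegative vectors $\mathbf{u}^{(l)}\in\mathbb{R}^n$. For $\mathbf{x}\in\mathbb{R}^n$ let $F_i(\mathbf{x})=\sum_{i_2,\dots,i_m=1}^n a_{ii_2\dots i_m}x_{i_2}\cdots x_{i_m}$. For odd $m$, $\mathcal{A}\in S_{m,n}$ is a strongly SOS tensor if each $F_i$, $i=1,\dots,n$, is a sum of squares of real polynomials. *)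

theory Defs
  imports Complex_Main "HOL-Library.Multiset"
begin

text \<open>Tensors of order m and dimension n are represented as functions on index lists
  (indices 0..n-1); only lists of length m with entries < n are relevant.
  Vectors in R^n are functions nat => real, of which only coordinates 0..n-1 matter.\<close>

definition index_lists :: "nat \<Rightarrow> nat \<Rightarrow> nat list set" where
  "index_lists k n = {is. length is = k \<and> set is \<subseteq> {..<n}}"

definition symmetric_tensor :: "nat \<Rightarrow> nat \<Rightarrow> (nat list \<Rightarrow> real) \<Rightarrow> bool" where
  "symmetric_tensor m n A \<longleftrightarrow>
     (\<forall>is \<in> index_lists m n. \<forall>js \<in> index_lists m n. mset is = mset js \<longrightarrow> A is = A js)"

definition tensor_power :: "(nat \<Rightarrow> real) \<Rightarrow> nat list \<Rightarrow> real" where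
  "tensor_power u is = prod_list (map u is)"

definition completely_positive :: "nat \<Rightarrow> nat \<Rightarrow> (nat list \<Rightarrow> real) \<Rightarrow> bool" where
  "completely_positive m n A \<longleftrightarrow>
     (\<exists>r::nat. r > 0 \<and> (\<exists>u :: nat \<Rightarrow> nat \<Rightarrow> real.
        (\<forall>l<r. \<forall>i<n. u l i \<ge> 0) \<and>
        (\<forall>is \<in> index_lists m n. A is = (\<Sum>l<r. tensor_power (u l) is))))"

definition F_comp :: "nat \<Rightarrow> nat \<Rightarrow> (nat list \<Rightarrow> real) \<Rightarrow> nat \<Rightarrow> (nat \<Rightarrow> real) \<Rightarrow> real" where
  "F_comp m n A i x = (\<Sum>is \<in> index_lists (m - 1) n. A (i # is) * prod_list (map x is))"

inductive_set real_polys :: "nat \<Rightarrow> ((nat \<Rightarrow> real) \<Rightarrow> real) set" for n :: nat where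
  const: "(\<lambda>x. c) \<in> real_polys n"
| var: "i < n \<Longrightarrow> (\<lambda>x. x i) \<in> real_polys n"
| add: "p \<in> real_polys n \<Longrightarrow> q \<in> real_polys n \<Longrightarrow> (\<lambda>x. p x + q x) \<in> real_polys n"
| mult: "p \<in> real_polys n \<Longrightarrow> q \<in> real_polys n \<Longrightarrow> (\<lambda>x. p x * q x) \<in> real_polys n"

definition is_sos :: "nat \<Rightarrow> ((nat \<Rightarrow> real) \<Rightarrow> real) \<Rightarrow> bool" where
  "is_sos n f \<longleftrightarrow> (\<exists>qs. set qs \<subseteq> real_polys n \<and>
      (\<forall>x. f x = (\<Sum>q\<leftarrow>qs. (q x)^2)))"

definition strongly_sos_tensor :: "nat \<Rightarrow> nat \<Rightarrow> (nat list \<Rightarrow> real) \<Rightarrow> bool" where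
  "strongly_sos_tensor m n A \<longleftrightarrow> (\<forall>i<n. is_sos n (F_comp m n A i))"

end

theory Submission
  imports Defs
begin

lemma index_lists_Suc:
  "index_lists (Suc k) n = (\<lambda>(j,is). j # is) ` ({..<n} \<times> index_lists k n)"
  unfolding index_lists_def
  by (auto simp: image_iff length_Suc_conv)

lemma index_lists_finite: "finite (index_lists k n)"
  by (induction k) (auto simp: index_lists_Suc, simp add: index_lists_def)

lemma sum_index_lists_pow:
  fixes f :: "nat \<Rightarrow> real"
  shows "(\<Sum>is\<in>index_lists k n. prod_list (map f is)) = (\<Sum>j<n. f j) ^ k"
proof (induction k)
  case 0
  have "index_lists 0 n = {[]}" by (auto simp: index_lists_def)
  then show ?case by simp
next
  case (Suc k)
  have inj: "inj_on (\<lambda>(j,is). j # is) ({..<n} \<times> index_lists k n)"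
    by (auto simp: inj_on_def)
  have "(\<Sum>is\<in>index_lists (Suc k) n. prod_list (map f is))
      = (\<Sum>p\<in>{..<n} \<times> index_lists k n. f (fst p) * prod_list (map f (snd p)))"
    unfolding index_lists_Suc by (subst sum.reindex[OF inj]) (auto intro!: sum.cong)
  also have "\<dots> = (\<Sum>j<n. \<Sum>is\<in>index_lists k n. f j * prod_list (map f is))"
    by (simp add: sum.cartesian_product case_prod_beta)
  also have "\<dots> = (\<Sum>j<n. f j) * (\<Sum>is\<in>index_lists k n. prod_list (map f is))"
    by (subst sum_product) simp
  finally show ?case using Suc by simp
qed

lemma prod_list_map_mult:
  fixes f g :: "nat \<Rightarrow> real"
  shows "prod_list (map f xs) * prod_list (map g xs) = prod_list (map (\<lambda>j. f j * g j) xs)"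
proof (induction xs)
  case (Cons a xs)
  then show ?case by (simp add: Cons.IH[symmetric] mult_ac)
qed simp

lemma sum_poly: "(\<And>j. j < (k::nat) \<Longrightarrow> f j \<in> real_polys n) \<Longrightarrow> (\<lambda>x. \<Sum>j<k. f j x) \<in> real_polys n"
proof (induction k)
  case 0
  then show ?case using real_polys.const[of 0 n] by simp
next
  case (Suc k)
  then show ?case using real_polys.add[of "\<lambda>x. \<Sum>j<k. f j x" n "f k"] by simp
qed

lemma pow_poly: "p \<in> real_polys n \<Longrightarrow> (\<lambda>x. p x ^ k) \<in> real_polys n"
proof (induction k)
  case 0
  then show ?case using real_polys.const[of 1 n] by simp
next
  case (Suc k)
  then show ?case using real_polys.mult[of p n "\<lambda>x. p x ^ k"] by simp
qed

theorem theorem4p4: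
  fixes m n :: nat and A :: "nat list \<Rightarrow> real"
  assumes "odd m" and "m \<ge> 3" and "n \<ge> 2"
    and "symmetric_tensor m n A"
    and "completely_positive m n A"
  shows "strongly_sos_tensor m n A"
  unfolding strongly_sos_tensor_def
proof (intro allI impI)
  fix i assume i: "i < n"
  obtain r :: nat and u :: "nat \<Rightarrow> nat \<Rightarrow> real" where r: "r > 0" and nn: "\<forall>l<r. \<forall>i<n. u l i \<ge> 0"
    and Ael: "\<forall>is \<in> index_lists m n. A is = (\<Sum>l<r. tensor_power (u l) is)"
    using assms(5) unfolding completely_positive_def by blast
  obtain k where k: "m - 1 = 2 * k" using assms(1) assms(2)
    by (intro that[of "(m - 1) div 2"]) (simp add: odd_two_times_div_two_nat)
  have k2: "m - Suc 0 = k * 2" using k by simp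
  define d where "d l x = (\<Sum>j<n. u l j * x j)" for l x
  define qs where "qs = map (\<lambda>l x. sqrt (u l i) * d l x ^ k) [0..<r]"
  have F: "F_comp m n A i x = (\<Sum>l<r. u l i * d l x ^ (m - 1))" for x
  proof -
    have "F_comp m n A i x = (\<Sum>is \<in> index_lists (m - 1) n.
             \<Sum>l<r. u l i * prod_list (map (\<lambda>j. u l j * x j) is))"
      unfolding F_comp_def
    proof (rule sum.cong[OF refl])
      fix js assume "js \<in> index_lists (m - 1) n"
      hence "i # js \<in> index_lists m n" using i assms(2) by (auto simp: index_lists_def)
      hence "A (i # js) = (\<Sum>l<r. u l i * prod_list (map (u l) js))"
        using Ael by (simp add: tensor_power_def)
      thus "A (i # js) * prod_list (map x js) =
             (\<Sum>l<r. u l i * prod_list (map (\<lambda>j. u l j * x j) js))"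
        by (simp add: sum_distrib_right prod_list_map_mult[symmetric] mult.assoc)
    qed
    also have "\<dots> = (\<Sum>l<r. u l i * (\<Sum>is \<in> index_lists (m - 1) n. prod_list (map (\<lambda>j. u l j * x j) is)))"
      by (subst sum.swap) (simp add: sum_distrib_left)
    also have "\<dots> = (\<Sum>l<r. u l i * d l x ^ (m - 1))"
      by (simp add: sum_index_lists_pow d_def)
    finally show ?thesis .
  qed
  show "is_sos n (F_comp m n A i)"
    unfolding is_sos_def
  proof (intro exI conjI allI)
    show "set qs \<subseteq> real_polys n"
    proof
      fix q assume "q \<in> set qs"
      then obtain l where q: "q = (\<lambda>x. sqrt (u l i) * d l x ^ k)" unfolding qs_def by auto
      have "(\<lambda>x. d l x) \<in> real_polys n" unfolding d_def
        by (rule sum_poly) (rule real_polys.mult[OF real_polys.const real_polys.var], simp)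
      from pow_poly[OF this, of k] show "q \<in> real_polys n"
        unfolding q by (rule real_polys.mult[OF real_polys.const])
    qed
    fix x
    have "(\<Sum>q\<leftarrow>qs. (q x)^2) = (\<Sum>l<r. (sqrt (u l i) * d l x ^ k)^2)"
      unfolding qs_def by (simp add: o_def sum_list_upt lessThan_atLeast0 interv_sum_list_conv_sum_set_nat)
    also have "\<dots> = (\<Sum>l<r. u l i * d l x ^ (m - 1))"
      using nn i by (intro sum.cong) (auto simp: power_mult_distrib k2 power_mult[symmetric])
    finally show "F_comp m n A i x = (\<Sum>q\<leftarrow>qs. (q x)^2)" using F by simp
  qed
qed

end
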